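(* Let $\vec r:\mathbb{Z}\to\mathbb{R}^2$ be a nondegenerate discrete planar curve with constant first and second centroaffine curvatures which is closed with period $p$. Then $\vec r$ is centrosymmetric if and only if $p$ is even.
   Context: A discrete planar curve is a map $\vec r:\mathbb{Z}\to\mathbb{R}^2$; write $\vec r_k=\vec r(k)$ and $\vec t_k=\vec r_{k+1}-\vec r_k$. $[\vec a,\vec b]$ denotes the $2\times2$ determinant. The curve is nondegenerate if $[\vec t_{k-1},\vec t_k]\ne0$ for all $k$. Its first and second centroaffine curvatures are $\kappa_k=\frac{[\vec t_k,\vec t_{k+1}]}{[\vec t_{k-1},\vec t_k]}$, $\bar\kappa_k=\frac{[\vec t_{k-1},\vec t_{k+1}]}{[\vec t_{k-1},\vec t_k]}$. Closed with period $p$: $\vec r(k+p)=\vec r(k)$ for all $k$, $p$ minimal. The closed curve is centrosymmetric if there is a point $\vec c\in\mathbb{R}^2$ such that the vertex set $\{\vec r_k:k\in\mathbb{Z}\}$ is invariant under the point reflection $\vec x\mapsto 2\vec c-\vec x$. *)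

theory Defs
  imports "HOL-Analysis.Analysis"
begin

type_synonym dcurve = "int \<Rightarrow> real^2"

definition det2 :: "real^2 \<Rightarrow> real^2 \<Rightarrow> real" where
  "det2 a b = a$1 * b$2 - a$2 * b$1"

definition tang :: "dcurve \<Rightarrow> int \<Rightarrow> real^2" where
  "tang r k = r (k + 1) - r k"

definition nondegenerate :: "dcurve \<Rightarrow> bool" where
  "nondegenerate r \<longleftrightarrow> (\<forall>k. det2 (tang r (k - 1)) (tang r k) \<noteq> 0)"

definition kappa :: "dcurve \<Rightarrow> int \<Rightarrow> real" where
  "kappa r k = det2 (tang r k) (tang r (k + 1)) / det2 (tang r (k - 1)) (tang r k)"

definition kappa_bar :: "dcurve \<Rightarrow> int \<Rightarrow> real" where
  "kappa_bar r k = det2 (tang r (k - 1)) (tang r (k + 1)) / det2 (tang r (k - 1)) (tang r k)"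

definition closed_with_period :: "dcurve \<Rightarrow> nat \<Rightarrow> bool" where
  "closed_with_period r p \<longleftrightarrow> p > 0 \<and> (\<forall>k. r (k + int p) = r k)
     \<and> (\<forall>q. 0 < q \<and> q < p \<longrightarrow> \<not> (\<forall>k. r (k + int q) = r k))"

definition centrosymmetric :: "dcurve \<Rightarrow> bool" where
  "centrosymmetric r \<longleftrightarrow> (\<exists>c::real^2. (\<lambda>x. 2 *\<^sub>R c - x) ` range r = range r)"

end

theory Submission
  imports Defs
begin
lemma det2_self[simp]: "det2 x x = 0" by (simp add: det2_def)

lemma det2_lin2: "det2 x (a *\<^sub>R y + b *\<^sub>R z) = a * det2 x y + b * det2 x z"
  by (simp add: det2_def algebra_simps)

lemma det2_lin2m: "det2 x (a *\<^sub>R y - b *\<^sub>R z) = a * det2 x y - b * det2 x z"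
  by (simp add: det2_def algebra_simps)

lemma cramer:
  assumes "det2 u v \<noteq> 0"
  shows "w = (det2 u w / det2 u v) *\<^sub>R v - (det2 v w / det2 u v) *\<^sub>R u"
proof -
  have "det2 u v *\<^sub>R w = det2 u w *\<^sub>R v - det2 v w *\<^sub>R u"
    unfolding vec_eq_iff forall_2 det2_def by (simp add: algebra_simps)
  then have "w = (1 / det2 u v) *\<^sub>R (det2 u w *\<^sub>R v - det2 v w *\<^sub>R u)"
    using assms by (metis divide_inverse_commute divide_self_if mult_1 scaleR_one scaleR_scaleR)
  then show ?thesis by (simp add: scaleR_diff_right)
qed

lemma coeff_unique:
  assumes "det2 A B \<noteq> 0" "x *\<^sub>R A + y *\<^sub>R B = x' *\<^sub>R A + y' *\<^sub>R B"
  shows "x = x' \<and> y = y'"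
proof -
  have e1: "(x - x') * A$1 + (y - y') * B$1 = 0" and e2: "(x - x') * A$2 + (y - y') * B$2 = 0"
    using assms(2) unfolding vec_eq_iff forall_2 by (auto simp: algebra_simps)
  have "(x - x') * det2 A B = B$2 * ((x - x') * A$1 + (y - y') * B$1) - B$1 * ((x - x') * A$2 + (y - y') * B$2)"
    by (simp add: det2_def algebra_simps)
  also have "\<dots> = 0" using e1 e2 by simp
  finally have "x = x'" using assms(1) by simp
  moreover have "(y - y') * det2 A B = A$1 * ((x - x') * A$2 + (y - y') * B$2) - A$2 * ((x - x') * A$1 + (y - y') * B$1)"
    by (simp add: det2_def algebra_simps)
  then have "(y - y') * det2 A B = 0" using e1 e2 by simp
  then have "y = y'" using assms(1) by simp
  ultimately show ?thesis by simp
qed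

lemma const_int:
  assumes "\<And>k::int. f (k + 1) = f k"
  shows "f k = f 0"
proof (induction k rule: int_induct[where k=0])
  case base then show ?case by simp
next
  case (step1 i) then show ?case using assms by simp
next
  case (step2 i) then show ?case using assms[of "i - 1"] by simp
qed

lemma rec_unique:
  fixes f h :: "int \<Rightarrow> 'a::real_vector"
  assumes "\<And>k. f (k + 1) = a *\<^sub>R f k - f (k - 1)" "\<And>k. h (k + 1) = a *\<^sub>R h k - h (k - 1)"
    "f 0 = h 0" "f 1 = h 1"
  shows "f k = h k"
proof -
  define d where "d k = f k - h k" for k
  have rec: "d (k + 1) = a *\<^sub>R d k - d (k - 1)" for k
    using assms(1,2)[of k] by (simp add: d_def algebra_simps)
  have "d k = 0 \<and> d (k + 1) = 0"
  proof (induction k rule: int_induct[where k=0])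
    case base then show ?case using assms(3,4) by (simp add: d_def)
  next
    case (step1 i) then show ?case using rec[of "i+1"] by simp
  next
    case (step2 i) then show ?case using rec[of i] by (simp add: algebra_simps)
  qed
  then show ?thesis by (simp add: d_def)
qed

lemma pos_seq1:
  fixes z :: "nat \<Rightarrow> real"
  assumes "c > 0" "z 0 = 0" "z 1 \<noteq> 0" "\<And>n. z (n + 2) = c * z (n + 1) + z n"
  shows "z (Suc n) \<noteq> 0"
proof -
  have "z 1 * z (Suc n) > 0 \<and> z 1 * z n \<ge> 0"
  proof (induction n)
    case 0 then show ?case using assms by (simp add: zero_less_mult_iff) linarith
  next
    case (Suc n)
    have "z 1 * z (Suc (Suc n)) = c * (z 1 * z (Suc n)) + z 1 * z n"
      using assms(4)[of n] by (simp add: algebra_simps)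
    then show ?case using Suc assms(1) by (simp add: add_pos_nonneg)
  qed
  then show ?thesis by auto
qed

lemma pos_seq2:
  fixes z :: "nat \<Rightarrow> real"
  assumes "c \<ge> 2" "z 0 = 0" "z 1 \<noteq> 0" "\<And>n. z (n + 2) = c * z (n + 1) - z n"
  shows "z (Suc n) \<noteq> 0"
proof -
  define w where "w n = z 1 * z n" for n
  have w1: "w 1 > 0" using assms(3) by (simp add: w_def zero_less_mult_iff) linarith
  have wr: "w (n + 2) = c * w (n + 1) - w n" for n
  proof -
    have "z (n+2) = c * z (n + 1) - z n" by (rule assms(4))
    then have "z 1 * z (n+2) = z 1 * (c * z (n + 1) - z n)" by (rule arg_cong)
    also have "\<dots> = c * (z 1 * z (n + 1)) - z 1 * z n" by (simp add: algebra_simps)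
    finally have "z 1 * z (n+2) = c * (z 1 * z (n + 1)) - z 1 * z n" .
    then show ?thesis by (simp add: w_def)
  qed
  have "w (Suc n) \<ge> w n + w 1 \<and> w n \<ge> 0"
  proof (induction n)
    case 0 then show ?case using assms by (simp add: w_def)
  next
    case (Suc n)
    have "w (Suc n) > 0" using Suc w1 by linarith
    then have h1: "c * w (Suc n) \<ge> 2 * w (Suc n)" using assms(1) by simp
    have h2: "w (Suc (Suc n)) = c * w (Suc n) - w n" using wr[of n] by simp
    show ?case using Suc h1 h2 w1 \<open>w (Suc n) > 0\<close> by linarith
  qed
  then have "w (Suc n) > 0" using w1 by linarith
  then show ?thesis by (auto simp: w_def)
qed

theorem corollary3p14:
  fixes r :: "int \<Rightarrow> real^2" and p :: nat
  assumes "nondegenerate r"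
    and "\<exists>c. \<forall>k. kappa r k = c"
    and "\<exists>c. \<forall>k. kappa_bar r k = c"
    and "closed_with_period r p"
  shows "centrosymmetric r \<longleftrightarrow> even p"
proof -
  define t where "t = tang r"
  obtain b where hb: "\<And>k. kappa r k = b" using assms(2) by blast
  obtain a where ha: "\<And>k. kappa_bar r k = a" using assms(3) by blast
  have nd: "\<And>k. det2 (t (k-1)) (t k) \<noteq> 0" using assms(1) by (simp add: nondegenerate_def t_def)
  have p0: "p > 0" and rp: "\<And>k. r (k + int p) = r k"
    and pmin: "\<And>q. 0<q \<Longrightarrow> q<p \<Longrightarrow> \<not>(\<forall>k. r (k + int q) = r k)"
    using assms(4) by (auto simp: closed_with_period_def)
  have tp: "t (k + int p) = t k" for k
    using rp[of "k+1"] rp[of k] by (simp add: t_def tang_def algebra_simps)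
  have trec: "t (k+1) = a *\<^sub>R t k - b *\<^sub>R t (k-1)" for k
  proof -
    have "t (k+1) = (det2 (t (k-1)) (t (k+1)) / det2 (t (k-1)) (t k)) *\<^sub>R t k
       - (det2 (t k) (t (k+1)) / det2 (t (k-1)) (t k)) *\<^sub>R t (k-1)"
      by (rule cramer[OF nd[of k]])
    then show ?thesis using hb[of k] ha[of k] by (simp add: kappa_def kappa_bar_def t_def)
  qed
  have Drec: "det2 (t k) (t (k+1)) = b * det2 (t (k-1)) (t k)" for k
    using hb[of k] nd[of k] by (simp add: kappa_def t_def field_simps)
  have Dpow: "det2 (t (int n)) (t (int n + 1)) = b^n * det2 (t 0) (t 1)" for n
  proof (induction n)
    case 0 then show ?case by simp
  next
    case (Suc n)
    have "det2 (t (int (Suc n))) (t (int (Suc n) + 1)) = b * det2 (t (int n)) (t (int n + 1))"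
      using Drec[of "int n + 1"] by (simp add: algebra_simps)
    then show ?case using Suc by simp
  qed
  define D1 where "D1 = det2 (t 0) (t 1)"
  have D1nz: "D1 \<noteq> 0" using nd[of 1] by (simp add: D1_def)
  have "b^p * D1 = D1" using Dpow[of p] tp[of 0] tp[of 1] by (simp add: D1_def add.commute)
  then have bp: "b^p = 1" using D1nz by simp
  have bpm: "b = 1 \<or> b = -1"
    using power_eq_1_iff[OF bp] p0 by auto
  have Lper: "p \<le> q" if q0: "q > 0" and tq: "\<And>k. t (k + int q) = t k" for q
  proof (rule ccontr)
    assume npq: "\<not> p \<le> q"
    define S where "S k = r (k + int q) - r k" for k
    have "S (k+1) = S k" for k
      using tq[of k] by (simp add: S_def t_def tang_def algebra_simps)
    then have Sc: "S k = S 0" for k using const_int[of S] by metis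
    have A: "r (k + int n * int q) = r k + real n *\<^sub>R S 0" for n k
    proof (induction n)
      case 0 then show ?case by simp
    next
      case (Suc n)
      have "r (k + int (Suc n) * int q) = r ((k + int n * int q) + int q)" by (simp add: algebra_simps)
      also have "\<dots> = r (k + int n * int q) + S (k + int n * int q)" by (simp add: S_def)
      finally show ?case using Suc Sc by (simp add: algebra_simps)
    qed
    have B: "r (k + int n * int p) = r k" for n k
    proof (induction n)
      case 0 then show ?case by simp
    next
      case (Suc n)
      have "r (k + int (Suc n) * int p) = r ((k + int n * int p) + int p)" by (simp add: algebra_simps)
      then show ?case using Suc rp by simp
    qed
    have "real p *\<^sub>R S 0 = 0" using A[of 0 p] B[of 0 q] by (simp add: mult.commute)
    then have "S 0 = 0" using p0 by simp
    then have "\<forall>k. r (k + int q) = r k" using Sc by (simp add: S_def)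
    then show False using pmin[of q] q0 npq by simp
  qed
  define s where "s n = det2 (t 0) (t (int n))" for n
  have srec: "s (n+2) = a * s (n+1) - b * s n" for n
  proof -
    have e: "int (n+2) = int n + 1 + 1" "int (n+1) = int n + 1" by simp_all
    show ?thesis unfolding s_def e trec[of "int n + 1"] det2_lin2m by simp
  qed
  have s0: "s 0 = 0" by (simp add: s_def)
  have s1: "s 1 = D1" by (simp add: s_def D1_def)
  have sp: "s p = 0" using tp[of 0] by (simp add: s_def)
  define y where "y n = (-1)^n * s n" for n
  have yrec: "y (n+2) = (-a) * y (n+1) - b * y n" for n
  proof -
    have "y (n+2) = (-1)^n * s (n+2)" by (simp add: y_def)
    also have "\<dots> = (-1)^n * (a * s (n+1) - b * s n)" by (simp only: srec)
    also have "\<dots> = (-a) * y (n+1) - b * y n" by (simp add: y_def algebra_simps)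
    finally show ?thesis .
  qed
  have y0: "y 0 = 0" by (simp add: y_def s0)
  have y1: "y 1 = - D1" using s1 by (simp add: y_def)
  have yp: "y p = 0" by (simp add: y_def sp)
  obtain p' where pp': "p = Suc p'" using p0 gr0_implies_Suc by blast
  have b1: "b = 1"
  proof (rule ccontr)
    assume "b \<noteq> 1"
    then have bm: "b = -1" using bpm by simp
    consider "a > 0" | "a < 0" | "a = 0" by linarith
    then show False
    proof cases
      case 1
      have "s (Suc p') \<noteq> 0"
        by (rule pos_seq1[where c=a]) (use 1 s0 s1 D1nz srec bm in auto)
      then show False using sp pp' by simp
    next
      case 2
      have "y (Suc p') \<noteq> 0"
        by (rule pos_seq1[where c="-a"]) (use 2 y0 y1 D1nz yrec bm in auto)
      then show False using yp pp' by simp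
    next
      case 3
      have "t (k + int 2) = t k" for k using trec[of "k+1"] 3 bm by (simp add: add.commute)
      then have "p \<le> 2" using Lper[of 2] by simp
      then have "p = 1 \<or> p = 2" using p0 by auto
      then show False
      proof
        assume "p = 1"
        then have "t 0 = 0" using rp[of 0] by (simp add: t_def tang_def)
        then show False using D1nz by (simp add: D1_def det2_def)
      next
        assume "p = 2"
        then have "t 1 = - t 0" using rp[of 0] by (simp add: t_def tang_def)
        then show False using D1nz by (simp add: D1_def det2_def)
      qed
    qed
  qed
  have a2: "\<bar>a\<bar> < 2"
  proof (rule ccontr)
    assume "\<not> \<bar>a\<bar> < 2"
    then consider "a \<ge> 2" | "-a \<ge> 2" by linarith
    then show False
    proof cases
      case 1
      have "s (Suc p') \<noteq> 0"
        by (rule pos_seq2[where c=a]) (use 1 s0 s1 D1nz srec b1 in auto)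
      then show False using sp pp' by simp
    next
      case 2
      have "y (Suc p') \<noteq> 0"
        by (rule pos_seq2[where c="-a"]) (use 2 y0 y1 D1nz yrec b1 in auto)
      then show False using yp pp' by simp
    qed
  qed

  have a2': "-1 < a/2" "a/2 < 1" using a2 by auto
  define th where "th = arccos (a/2)"
  have cth: "cos th = a/2" using a2' by (simp add: th_def)
  have sth: "sin th > 0" using arccos_lt_bounded[OF a2'] sin_gt_zero th_def by auto
  have trec1: "t (k+1) = a *\<^sub>R t k - t (k-1)" for k using trec[of k] b1 by simp
  define E where "E k = r (k+1) + r (k-1) - a *\<^sub>R r k" for k
  have "E (k+1) = E k" for k
    using trec1[of k] by (simp add: E_def t_def tang_def algebra_simps)
  then have Ec: "E k = E 0" for k using const_int[of E] by metis
  define C where "C = (1/(2-a)) *\<^sub>R E 0"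
  have EC: "E 0 = (2 - a) *\<^sub>R C" using a2 by (simp add: C_def)
  define g where "g k = r k - C" for k
  have grec: "g (k+1) = a *\<^sub>R g k - g (k-1)" for k
  proof -
    have "r (k+1) + r (k-1) - a *\<^sub>R r k = (2 - a) *\<^sub>R C" using Ec[of k] EC by (simp add: E_def)
    then have "r (k+1) = (2 - a) *\<^sub>R C - r (k-1) + a *\<^sub>R r k" by (simp add: algebra_simps)
    then have "g (k+1) = (2 - a) *\<^sub>R C - r (k-1) + a *\<^sub>R r k - C" by (simp add: g_def)
    also have "\<dots> = a *\<^sub>R g k - g (k-1)" by (simp add: g_def scaleR_diff_left scaleR_diff_right scaleR_2)
    finally show ?thesis .
  qed
  define A where "A = g 0"
  define B where "B = (1 / sin th) *\<^sub>R (g 1 - cos th *\<^sub>R g 0)"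
  define h where "h k = cos (of_int k * th) *\<^sub>R A + sin (of_int k * th) *\<^sub>R B" for k
  have hrec: "h (k+1) = a *\<^sub>R h k - h (k-1)" for k
  proof -
    have e1: "of_int (k+1) * th = of_int k * th + th" and e2: "of_int (k-1) * th = of_int k * th - th"
      by (simp_all add: algebra_simps)
    have ha2: "a = 2 * cos th" using cth by simp
    show ?thesis unfolding h_def e1 e2 cos_add cos_diff sin_add sin_diff ha2 vec_eq_iff forall_2
      by (simp add: algebra_simps)
  qed
  have h1: "h 1 = g 1" using sth by (simp add: h_def A_def B_def)
  have gh: "g k = h k" for k
    by (rule rec_unique[where a=a]) (use grec hrec h1 in \<open>auto simp: h_def A_def\<close>)
  have detAB: "det2 A B \<noteq> 0"
  proof -
    have t0: "t 0 = g 1 - g 0" and t1: "t 1 = (a - 1) *\<^sub>R g 1 - g 0"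
      using grec[of 1] by (simp_all add: t_def tang_def g_def algebra_simps)
    have g1: "g 1 = cos th *\<^sub>R A + sin th *\<^sub>R B" using h1 by (simp add: h_def)
    have "D1 = (2 - a) * sin th * det2 A B"
      unfolding D1_def t0 t1 g1 A_def[symmetric] by (simp add: det2_def algebra_simps)
    then show ?thesis using D1nz by auto
  qed
  have gshift: "g (k + m) = g k" if cm: "cos (of_int m * th) = 1" for k m
  proof -
    have sm: "sin (of_int m * th) = 0" using cos_one_sin_zero[OF cm] .
    have e: "of_int (k+m) * th = of_int k * th + of_int m * th" by (simp add: algebra_simps)
    show ?thesis unfolding gh h_def e cos_add sin_add using cm sm by simp
  qed
  have gper_cos: "cos (of_int m * th) = 1" if gm: "g m = g 0" for m
  proof -
    have "cos (of_int m * th) *\<^sub>R A + sin (of_int m * th) *\<^sub>R B = 1 *\<^sub>R A + 0 *\<^sub>R B"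
      using gm gh[of m] gh[of 0] by (simp add: h_def)
    then show ?thesis using coeff_unique[OF detAB] by blast
  qed
  have gp: "g (k + int p) = g k" for k using rp[of k] by (simp add: g_def)
  have cp: "cos (of_int (int p) * th) = 1" using gper_cos[of "int p"] gp[of 0] by simp
  have minc: "cos (of_int m * th) \<noteq> 1" if "0 < m" "m < int p" for m
  proof
    assume "cos (of_int m * th) = 1"
    then have "\<forall>k. r (k + int (nat m)) = r k" using gshift that by (simp add: g_def)
    moreover have "0 < nat m" "nat m < p" "int (nat m) = m" using that by auto
    ultimately show False using pmin[of "nat m"] by simp
  qed
  have cjp: "cos (of_int (int p * j) * th) = 1" for j
  proof -
    obtain n :: int where "of_int (int p) * th = of_int n * 2 * pi" using cp cos_one_2pi_int by blast
    then have "of_int (int p * j) * th = of_int (n * j) * 2 * pi" by (simp add: algebra_simps)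
    then show ?thesis using cos_one_2pi_int by blast
  qed
  have dvdc: "int p dvd m" if cm: "cos (of_int m * th) = 1" for m
  proof (rule ccontr)
    assume nd: "\<not> int p dvd m"
    have e: "of_int (m mod int p) * th = of_int m * th - of_int (int p * (m div int p)) * th"
      by (simp add: minus_div_mult_eq_mod[symmetric] algebra_simps)
    have "cos (of_int (m mod int p) * th) = 1"
      unfolding e cos_diff using cm cjp[of "m div int p"] cos_one_sin_zero[OF cm]
        cos_one_sin_zero[OF cjp[of "m div int p"]] by simp
    moreover have "m mod int p \<noteq> 0" using nd by (simp add: dvd_eq_mod_eq_0)
    then have "0 < m mod int p" "m mod int p < int p" using p0
      by (simp_all add: order_le_neq_trans)
    ultimately show False using minc by blast
  qed
  have cos2: "cos (of_int (2 * m) * th) = 2 * (cos (of_int m * th))^2 - 1" for m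
  proof -
    have "of_int (2 * m) * th = 2 * (of_int m * th)" by simp
    then show ?thesis by (metis cos_double_cos)
  qed
  have rg: "r k = C + g k" for k by (simp add: g_def)
  show ?thesis
  proof
    assume cs: "centrosymmetric r"
    then obtain c where hc: "(\<lambda>x. 2 *\<^sub>R c - x) ` range r = range r" by (auto simp: centrosymmetric_def)
    show "even p"
    proof (rule ccontr)
      assume op: "odd p"
      define R where "R = range r"
      have Rimg: "R = (\<lambda>n. r (int n)) ` {..<p}"
      proof
        show "R \<subseteq> (\<lambda>n. r (int n)) ` {..<p}"
        proof
          fix x assume "x \<in> R"
          then obtain k where xk: "x = r k" by (auto simp: R_def)
          have km: "k = k mod int p + int p * (k div int p)" by simp
          have "r k = r (k mod int p)"
            using gshift[OF cjp[of "k div int p"], of "k mod int p"] km by (metis add_left_cancel g_def diff_add_cancel)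
          moreover have "k mod int p = int (nat (k mod int p))" "nat (k mod int p) < p" using p0 by (auto simp: nat_less_iff)
          ultimately show "x \<in> (\<lambda>n. r (int n)) ` {..<p}" using xk by (metis image_eqI lessThan_iff)
        qed
      qed (auto simp: R_def)
      have inj: "inj_on (\<lambda>n. r (int n)) {..<p}"
      proof (rule inj_onI, rule ccontr)
        fix i j assume i: "i \<in> {..<p}" and j: "j \<in> {..<p}" and eq: "r (int i) = r (int j)" and ne: "i \<noteq> j"
        have "\<exists>u v. u < v \<and> v < p \<and> r (int u) = r (int v)"
          using i j eq ne by (metis lessThan_iff nat_neq_iff)
        then obtain u v where uv: "u < v" "v < p" "r (int u) = r (int v)" by blast
        have "h (int v) = h (int u)" using uv(3) gh[of "int u"] gh[of "int v"] by (simp add: g_def)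
        then have "cos (real v * th) = cos (real u * th) \<and> sin (real v * th) = sin (real u * th)"
          using coeff_unique[OF detAB] by (simp add: h_def)
        then have "cos (of_int (int v - int u) * th) = 1"
          using sin_cos_squared_add[of "real u * th"]
          by (simp add: left_diff_distrib cos_diff power2_eq_square)
        then show False using minc[of "int v - int u"] uv by simp
      qed
      have cardR: "card R = p" using Rimg inj by (simp add: card_image)
      have finR: "finite R" using Rimg by simp
      have sg: "(\<Sum>n<p. g (int n)) = 0"
      proof -
        have s1: "(\<Sum>n<p. g (int n + 1)) = (\<Sum>n<p. g (int n))"
        proof -
          have "(\<Sum>n<Suc p. g (int n)) = g 0 + (\<Sum>n<p. g (int (Suc n)))" using sum.lessThan_Suc_shift[of "\<lambda>n. g (int n)" p] by simp
          moreover have "(\<Sum>n<Suc p. g (int n)) = (\<Sum>n<p. g (int n)) + g (int p)" by simp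
          moreover have "g (int p) = g 0" using gp[of 0] by simp
          ultimately show ?thesis by (simp add: add.commute)
        qed
        have s2: "(\<Sum>n<p. g (int n - 1)) = (\<Sum>n<p. g (int n))"
        proof -
          have "(\<Sum>n<Suc p'. g (int n - 1)) = g (-1) + (\<Sum>n<p'. g (int (Suc n) - 1))" using sum.lessThan_Suc_shift[of "\<lambda>n. g (int n - 1)" p'] by simp
          moreover have "(\<Sum>n<Suc p'. g (int n)) = (\<Sum>n<p'. g (int n)) + g (int p')" by simp
          moreover have "g (int p') = g (-1)" using gp[of "-1"] pp' by simp
          ultimately show ?thesis using pp' by (simp add: add.commute)
        qed
        have "(\<Sum>n<p. g (int n + 1) + g (int n - 1)) = (\<Sum>n<p. a *\<^sub>R g (int n))"
          by (rule sum.cong) (simp_all add: grec)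
        then have "(\<Sum>n<p. g (int n + 1)) + (\<Sum>n<p. g (int n - 1)) = a *\<^sub>R (\<Sum>n<p. g (int n))"
          by (simp only: sum.distrib scaleR_sum_right)
        then have SS: "(\<Sum>n<p. g (int n)) + (\<Sum>n<p. g (int n)) = a *\<^sub>R (\<Sum>n<p. g (int n))"
          by (simp only: s1 s2)
        have "(2 - a) *\<^sub>R (\<Sum>n<p. g (int n)) = 2 *\<^sub>R (\<Sum>n<p. g (int n)) - a *\<^sub>R (\<Sum>n<p. g (int n))"
          by (rule scaleR_diff_left)
        also have "\<dots> = 0" by (simp only: scaleR_2 SS) simp
        finally have "(2 - a) *\<^sub>R (\<Sum>n<p. g (int n)) = 0" .
        then show ?thesis using a2 by auto
      qed
      have sumR: "(\<Sum>x\<in>R. x) = real p *\<^sub>R C"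
      proof -
        have "(\<Sum>x\<in>R. x) = (\<Sum>n<p. r (int n))" using Rimg inj by (simp add: sum.reindex)
        also have "\<dots> = (\<Sum>n<p. C + g (int n))" using rg by simp
        also have "\<dots> = real p *\<^sub>R C + (\<Sum>n<p. g (int n))" by (simp add: sum.distrib sum_constant_scaleR del: sum_constant)
        finally show ?thesis using sg by simp
      qed
      have injs: "inj_on (\<lambda>x. 2 *\<^sub>R c - x) R" by (rule inj_onI) simp
      have "(\<Sum>x\<in>R. x) = (\<Sum>x\<in>(\<lambda>x. 2 *\<^sub>R c - x) ` R. x)" using hc by (simp add: R_def)
      also have "\<dots> = (\<Sum>x\<in>R. 2 *\<^sub>R c - x)" using injs by (simp add: sum.reindex)
      also have "\<dots> = real p *\<^sub>R (2 *\<^sub>R c) - (\<Sum>x\<in>R. x)" by (simp add: sum_subtractf cardR sum_constant_scaleR del: sum_constant)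
      finally have eqX: "(\<Sum>x\<in>R. x) = real p *\<^sub>R (2 *\<^sub>R c) - (\<Sum>x\<in>R. x)" .
      have "real p *\<^sub>R (2 *\<^sub>R c) = (\<Sum>x\<in>R. x) + (\<Sum>x\<in>R. x)"
        using eqX by (metis eq_diff_eq)
      also have "\<dots> = (2 * real p) *\<^sub>R C" using sumR by (metis scaleR_left_distrib mult_2)
      finally have "(2 * real p) *\<^sub>R c = (2 * real p) *\<^sub>R C" by (simp add: mult.commute)
      then have cC: "c = C" using p0 by simp
      have "2 *\<^sub>R c - r 0 \<in> R" using hc by (auto simp: R_def)
      then obtain j where "2 *\<^sub>R C - r 0 = r j" using cC by (auto simp: R_def)
      then have "r j - C = C - r 0" by (simp add: scaleR_2)
      then have "g j = - g 0" by (simp add: g_def)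
      then have "cos (of_int j * th) *\<^sub>R A + sin (of_int j * th) *\<^sub>R B = (-1) *\<^sub>R A + 0 *\<^sub>R B"
        using gh[of j] gh[of 0] by (simp add: h_def)
      then have cj: "cos (of_int j * th) = -1" using coeff_unique[OF detAB] by blast
      then have "cos (of_int (2 * j) * th) = 1" using cos2[of j] by simp
      then have "int p dvd 2 * j" by (rule dvdc)
      then have "int p dvd j" using op
        by (metis coprime_commute coprime_dvd_mult_right_iff odd_numeral even_of_nat coprime_int_iff
            coprime_left_2_iff_odd dvd_mult_cancel1)
      then obtain l where "j = int p * l" by blast
      then have "cos (of_int j * th) = 1" using cjp by simp
      then show False using cj by simp
    qed
  next
    assume ep: "even p"
    then obtain q where pq: "p = 2 * q" by blast
    have q0: "0 < int q" "int q < int p" using pq p0 by auto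
    have "2 * (cos (of_int (int q) * th))^2 - 1 = 1" using cos2[of "int q"] cp pq by simp
    then have "(cos (of_int (int q) * th))^2 = 1" by simp
    then have "cos (of_int (int q) * th) = 1 \<or> cos (of_int (int q) * th) = -1"
      by (simp add: power2_eq_1_iff)
    then have cq: "cos (of_int (int q) * th) = -1" using minc[OF q0] by blast
    have "(sin (of_int (int q) * th))^2 = 0"
      unfolding sin_squared_eq cq by simp
    then have sq: "sin (of_int (int q) * th) = 0" by simp
    have gneg: "g (k + int q) = - g k" for k
    proof -
      have e: "of_int (k + int q) * th = of_int k * th + of_int (int q) * th" by (simp add: algebra_simps)
      show ?thesis unfolding gh h_def e cos_add sin_add using cq sq by simp
    qed
    show "centrosymmetric r"
      unfolding centrosymmetric_def
    proof (rule exI[where x=C], rule set_eqI, rule iffI)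
      fix x assume "x \<in> (\<lambda>x. 2 *\<^sub>R C - x) ` range r"
      then obtain k where "x = 2 *\<^sub>R C - r k" by auto
      then have "x = r (k + int q)" using gneg[of k] rg[of k] rg[of "k + int q"]
        by (simp add: algebra_simps scaleR_2) (metis add.commute add_left_cancel)
      then show "x \<in> range r" by simp
    next
      fix x assume "x \<in> range r"
      then obtain k where xk: "x = r k" by auto
      have "g k = - g (k - int q)" using gneg[of "k - int q"] by simp
      then have "x = 2 *\<^sub>R C - r (k - int q)" using xk rg[of k] rg[of "k - int q"] by (simp add: algebra_simps scaleR_2)
      then show "x \<in> (\<lambda>x. 2 *\<^sub>R C - x) ` range r" by blast
    qed
  qed
qed

end
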